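(* Let $\Delta\subset\mathbb{R}^2$ be a lattice polygon with $\operatorname{lw}(\Delta)=d>0$. Let $P$ be a vertex of $\Delta$ and let $v\in\mathbb{Z}^2$ be a primitive vector. If $\operatorname{lw}_v(\Delta_P)<d$ and $\operatorname{lw}_v(\Delta_P)<\operatorname{lw}_v(\Delta)-1$, then $\Delta$ is unimodularly equivalent to $\Upsilon_{d-1}:=\operatorname{conv}\{(0,0),(1,d),(d,1)\}$.
   Context: A lattice polygon is the convex hull of a finite non-empty set of points of $\mathbb{Z}^2$. For a lattice polygon $\Delta$ and a non-zero primitive $v\in\mathbb{Z}^2$, $\operatorname{lw}_v(\Delta)=\max_{Q\in\Delta}\langle Q,v\rangle-\min_{Q\in\Delta}\langle Q,v\rangle$, and $\operatorname{lw}(\Delta)=\min_v\operatorname{lw}_v(\Delta)$ over all non-zero primitive $v\in\mathbb{Z}^2$. For a vertex $P$ of $\Delta$, $\Delta_P:=\operatorname{conv}((\Delta\cap\mathbb{Z}^2)\setminus\{P\})$. Two lattice polygons are (unimodularly) equivalent if one is the image of the other under a map $x\mapsto Ax+b$ with $A\in\mathrm{GL}_2(\mathbb{Z})$, $b\in\mathbb{Z}^2$. *)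

theory Defs
  imports "HOL-Analysis.Analysis"
begin

definition lattice_pt :: "real \<times> real \<Rightarrow> bool" where
  "lattice_pt x \<longleftrightarrow> fst x \<in> \<int> \<and> snd x \<in> \<int>"

definition lattice_polygon :: "(real \<times> real) set \<Rightarrow> bool" where
  "lattice_polygon D \<longleftrightarrow>
     (\<exists>S. finite S \<and> S \<noteq> {} \<and> (\<forall>x\<in>S. lattice_pt x) \<and> D = convex hull S)"

definition primitive :: "int \<times> int \<Rightarrow> bool" where
  "primitive v \<longleftrightarrow> v \<noteq> (0,0) \<and> gcd (fst v) (snd v) = 1"

definition pair_ip :: "real \<times> real \<Rightarrow> int \<times> int \<Rightarrow> real" where
  "pair_ip Q v = fst Q * of_int (fst v) + snd Q * of_int (snd v)"

definition lw_dir :: "(real \<times> real) set \<Rightarrow> int \<times> int \<Rightarrow> real" where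
  "lw_dir D v = (SUP Q\<in>D. pair_ip Q v) - (INF Q\<in>D. pair_ip Q v)"

definition lw :: "(real \<times> real) set \<Rightarrow> real" where
  "lw D = (INF v\<in>{v. primitive v}. lw_dir D v)"

definition remove_vertex :: "(real \<times> real) set \<Rightarrow> real \<times> real \<Rightarrow> (real \<times> real) set" where
  "remove_vertex D P = convex hull ({x\<in>D. lattice_pt x} - {P})"

definition unimod_map :: "int \<Rightarrow> int \<Rightarrow> int \<Rightarrow> int \<Rightarrow> int \<Rightarrow> int \<Rightarrow> real \<times> real \<Rightarrow> real \<times> real" where
  "unimod_map a b c e t1 t2 x =
     (of_int a * fst x + of_int b * snd x + of_int t1,
      of_int c * fst x + of_int e * snd x + of_int t2)"

definition unimod_equiv :: "(real \<times> real) set \<Rightarrow> (real \<times> real) set \<Rightarrow> bool" where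
  "unimod_equiv D D' \<longleftrightarrow>
     (\<exists>a b c e t1 t2. (a * e - b * c = 1 \<or> a * e - b * c = -1) \<and>
        unimod_map a b c e t1 t2 ` D = D')"

definition Upsilon :: "int \<Rightarrow> (real \<times> real) set" where
  "Upsilon d = convex hull {(0,0), (1, of_int d), (of_int d, 1)}"

end

theory Submission
  imports Defs
begin


definition emb :: "int \<times> int \<Rightarrow> real \<times> real" where
  "emb z = (of_int (fst z), of_int (snd z))"

definition ipi :: "int \<times> int \<Rightarrow> int \<times> int \<Rightarrow> int" where
  "ipi z u = fst z * fst u + snd z * snd u"

lemma pair_ip_emb: "pair_ip (emb z) u = of_int (ipi z u)"
  by (simp add: pair_ip_def emb_def ipi_def)

lemma emb_inj: "emb a = emb b \<longleftrightarrow> a = b"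
  by (cases a; cases b) (simp add: emb_def)

lemma pair_ip_lin: "pair_ip (a *\<^sub>R x + b *\<^sub>R y) u = a * pair_ip x u + b * pair_ip y u"
  by (cases x; cases y) (simp add: pair_ip_def algebra_simps)

lemma convex_le: "convex {x. pair_ip x u \<le> c}"
  unfolding convex_def
proof (safe)
  fix x y :: "real \<times> real" and a b :: real
  assume h: "pair_ip x u \<le> c" "pair_ip y u \<le> c" "0 \<le> a" "0 \<le> b" "a + b = 1"
  have "a * pair_ip x u + b * pair_ip y u \<le> a * c + b * c"
    using h by (intro add_mono mult_left_mono) auto
  moreover have "a * c + b * c = c" using h(5) by (metis distrib_right mult_1)
  ultimately show "pair_ip (a *\<^sub>R x + b *\<^sub>R y) u \<le> c" by (simp add: pair_ip_lin)
qed

lemma convex_ge: "convex {x. c \<le> pair_ip x u}"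
  unfolding convex_def
proof (safe)
  fix x y :: "real \<times> real" and a b :: real
  assume h: "c \<le> pair_ip x u" "c \<le> pair_ip y u" "0 \<le> a" "0 \<le> b" "a + b = 1"
  have "a * c + b * c \<le> a * pair_ip x u + b * pair_ip y u"
    using h by (intro add_mono mult_left_mono) auto
  moreover have "a * c + b * c = c" using h(5) by (metis distrib_right mult_1)
  ultimately show "c \<le> pair_ip (a *\<^sub>R x + b *\<^sub>R y) u" by (simp add: pair_ip_lin)
qed

lemma hull_le:
  assumes "\<And>x. x \<in> T \<Longrightarrow> pair_ip x u \<le> c" "z \<in> convex hull T"
  shows "pair_ip z u \<le> c"
proof -
  have "convex hull T \<subseteq> {x. pair_ip x u \<le> c}"
    by (rule hull_minimal) (use assms convex_le in auto)
  then show ?thesis using assms by auto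
qed

lemma hull_ge:
  assumes "\<And>x. x \<in> T \<Longrightarrow> c \<le> pair_ip x u" "z \<in> convex hull T"
  shows "c \<le> pair_ip z u"
proof -
  have "convex hull T \<subseteq> {x. c \<le> pair_ip x u}"
    by (rule hull_minimal) (use assms convex_ge in auto)
  then show ?thesis using assms by auto
qed

lemma SUP_hull:
  assumes "finite T" "T \<noteq> {}"
  shows "(SUP x\<in>convex hull T. pair_ip x u) = Max ((\<lambda>x. pair_ip x u) ` T)"
proof (rule cSup_eq_maximum)
  have "Max ((\<lambda>x. pair_ip x u) ` T) \<in> (\<lambda>x. pair_ip x u) ` T"
    using assms by (intro Max_in) auto
  then obtain t where t: "t \<in> T" "pair_ip t u = Max ((\<lambda>x. pair_ip x u) ` T)"
    by (metis (no_types, lifting) imageE)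
  then show "Max ((\<lambda>x. pair_ip x u) ` T) \<in> (\<lambda>x. pair_ip x u) ` (convex hull T)"
    using hull_subset[of T convex] by force
  show "y \<le> Max ((\<lambda>x. pair_ip x u) ` T)" if "y \<in> (\<lambda>x. pair_ip x u) ` (convex hull T)" for y
    using that hull_le[of T u] assms by auto
qed

lemma INF_hull:
  assumes "finite T" "T \<noteq> {}"
  shows "(INF x\<in>convex hull T. pair_ip x u) = Min ((\<lambda>x. pair_ip x u) ` T)"
proof (rule cInf_eq_minimum)
  have "Min ((\<lambda>x. pair_ip x u) ` T) \<in> (\<lambda>x. pair_ip x u) ` T"
    using assms by (intro Min_in) auto
  then obtain t where t: "t \<in> T" "pair_ip t u = Min ((\<lambda>x. pair_ip x u) ` T)"
    by (metis (no_types, lifting) imageE)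
  then show "Min ((\<lambda>x. pair_ip x u) ` T) \<in> (\<lambda>x. pair_ip x u) ` (convex hull T)"
    using hull_subset[of T convex] by force
  show "Min ((\<lambda>x. pair_ip x u) ` T) \<le> y" if "y \<in> (\<lambda>x. pair_ip x u) ` (convex hull T)" for y
    using that hull_ge[of T _ u] assms by auto
qed

lemma lw_dir_hull:
  assumes "finite T" "T \<noteq> {}"
  shows "lw_dir (convex hull T) u = Max ((\<lambda>x. pair_ip x u) ` T) - Min ((\<lambda>x. pair_ip x u) ` T)"
  using SUP_hull[OF assms] INF_hull[OF assms] by (simp add: lw_dir_def)

lemma lw_dir_hull_nonneg:
  assumes "finite T" "T \<noteq> {}"
  shows "0 \<le> lw_dir (convex hull T) u"
proof -
  obtain t where "t \<in> T" using assms by auto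
  then have "Min ((\<lambda>x. pair_ip x u) ` T) \<le> Max ((\<lambda>x. pair_ip x u) ` T)"
    using assms by (meson Max_ge Min_le finite_imageI imageI order_trans)
  then show ?thesis using lw_dir_hull[OF assms] by simp
qed

lemma lw_dir_emb:
  assumes "finite Z" "Z \<noteq> {}"
  shows "lw_dir (convex hull (emb ` Z)) u = of_int (Max ((\<lambda>y. ipi y u) ` Z) - Min ((\<lambda>y. ipi y u) ` Z))"
proof -
  have e: "(\<lambda>x. pair_ip x u) ` emb ` Z = of_int ` (\<lambda>y. ipi y u) ` Z"
    by (auto simp: image_image pair_ip_emb)
  have m: "mono (of_int :: int \<Rightarrow> real)" by (auto intro: monoI)
  show ?thesis
    using assms by (simp add: lw_dir_hull e mono_Max_commute[OF m] mono_Min_commute[OF m])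
qed



lemma in_hull3:
  fixes a b :: real and z x0 x1 x2 :: "real \<times> real"
  assumes "0 \<le> a" "0 \<le> b" "a + b \<le> 1"
    and "fst z = (1 - a - b) * fst x0 + a * fst x1 + b * fst x2"
    and "snd z = (1 - a - b) * snd x0 + a * snd x1 + b * snd x2"
  shows "z \<in> convex hull {x0, x1, x2}"
  unfolding convex_hull_3
proof (intro CollectI exI conjI)
  show "z = (1 - a - b) *\<^sub>R x0 + a *\<^sub>R x1 + b *\<^sub>R x2"
    using assms(4,5) by (simp add: prod_eq_iff)
qed (use assms in auto)

lemma hull3_sub:
  assumes "x0 \<in> X" "x1 \<in> X" "x2 \<in> X" "z \<in> convex hull {x0, x1, x2}"
  shows "z \<in> convex hull X"
proof -
  have "{x0,x1,x2} \<subseteq> X" using assms by auto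
  then show ?thesis using assms(4) hull_mono by blast
qed

lemma unimod_hull:
  "unimod_map a b c e t1 t2 ` (convex hull X) = convex hull (unimod_map a b c e t1 t2 ` X)"
proof -
  define L where "L = (\<lambda>x::real\<times>real. (of_int a * fst x + of_int b * snd x, of_int c * fst x + of_int e * snd x))"
  have lin: "linear L"
    by (rule linearI) (auto simp: L_def algebra_simps)
  have eq: "unimod_map a b c e t1 t2 = (\<lambda>x. (of_int t1, of_int t2) + x) \<circ> L"
    by (rule ext) (simp add: unimod_map_def L_def)
  show ?thesis
    unfolding eq image_comp[symmetric]
    by (simp add: convex_hull_linear_image[OF lin] convex_hull_translation)
qed

lemma gcd1_of_det:
  fixes a b c e :: int
  assumes "a * e - b * c = 1"
  shows "gcd e (- c) = 1" "gcd (- b) a = 1"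
proof -
  have "gcd e (- c) dvd a * e - b * c" by (simp add: dvd_diff)
  then have "gcd e (- c) dvd 1" using assms by simp
  then show "gcd e (- c) = 1" by simp
  have "gcd (- b) a dvd a * e - b * c" by (simp add: dvd_diff)
  then have "gcd (- b) a dvd 1" using assms by simp
  then show "gcd (- b) a = 1" by simp
qed

lemma hullUps:
  fixes a b d :: int
  assumes "1 \<le> a" "1 \<le> b" "a + b \<le> d + 1" "d \<ge> 1"
  shows "(real_of_int a, real_of_int b) \<in> Upsilon d"
proof (cases "d = 1")
  case True
  then have "a = 1" "b = 1" using assms by auto
  then show ?thesis using True unfolding Upsilon_def by (simp add: hull_inc)
next
  case False
  then have d2: "d \<ge> 2" using assms by simp
  define N where "N = real_of_int d * of_int d - 1"
  have rd: "real_of_int d \<ge> 2" using d2 by simp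
  have "real_of_int d * of_int d \<ge> 2 * 2" using rd by (intro mult_mono) auto
  then have Npos: "N > 0" unfolding N_def by simp
  define be where "be = (of_int b * of_int d - of_int a) / N"
  define ga where "ga = (of_int a * of_int d - of_int b) / N"
  have i1: "a \<le> b * d"
  proof -
    have "(b - 1) * (d + 1) \<ge> 0" using assms by simp
    then show ?thesis using assms by (simp add: algebra_simps)
  qed
  have i2: "b \<le> a * d"
  proof -
    have "(a - 1) * (d + 1) \<ge> 0" using assms by simp
    then show ?thesis using assms by (simp add: algebra_simps)
  qed
  have "real_of_int a \<le> of_int b * of_int d" using i1 by (metis of_int_le_iff of_int_mult)
  then have be0: "0 \<le> be" unfolding be_def using Npos by simp
  have "real_of_int b \<le> of_int a * of_int d" using i2 by (metis of_int_le_iff of_int_mult)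
  then have ga0: "0 \<le> ga" unfolding ga_def using Npos by simp
  have "be + ga = (of_int a + of_int b) * (of_int d - 1) / N"
    unfolding be_def ga_def by (simp add: add_divide_distrib[symmetric] algebra_simps)
  also have "\<dots> = (of_int a + of_int b) / (of_int d + 1)"
  proof -
    have "N = (of_int d + 1) * (of_int d - 1)" unfolding N_def by (simp add: algebra_simps)
    moreover have "real_of_int d - 1 \<noteq> 0" using d2 by simp
    ultimately show ?thesis by simp
  qed
  also have "\<dots> \<le> 1"
  proof -
    have "real_of_int a + of_int b \<le> of_int d + 1" using assms(3) by (metis of_int_add of_int_le_iff of_int_1)
    then show ?thesis using d2 by simp
  qed
  finally have s1: "be + ga \<le> 1" .
  have f1: "real_of_int a = (1 - be - ga) * 0 + be * 1 + ga * of_int d"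
  proof -
    have "be * 1 + ga * of_int d = (of_int b * of_int d - of_int a + (of_int a * of_int d - of_int b) * of_int d) / N"
      unfolding be_def ga_def by (simp add: add_divide_distrib)
    also have "\<dots> = (of_int a * N) / N" unfolding N_def by (simp add: algebra_simps)
    also have "\<dots> = of_int a" using Npos by simp
    finally show ?thesis by simp
  qed
  have f2: "real_of_int b = (1 - be - ga) * 0 + be * of_int d + ga * 1"
  proof -
    have "be * of_int d + ga * 1 = ((of_int b * of_int d - of_int a) * of_int d + (of_int a * of_int d - of_int b)) / N"
      unfolding be_def ga_def by (simp add: add_divide_distrib)
    also have "\<dots> = (of_int b * N) / N" unfolding N_def by (simp add: algebra_simps)
    also have "\<dots> = of_int b" using Npos by simp
    finally show ?thesis by simp
  qed
  show ?thesis unfolding Upsilon_def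
    by (rule in_hull3[OF be0 ga0 s1]) (use f1 f2 in simp_all)
qed


lemma coef_aux1: "tt - ss > 0 \<Longrightarrow> (V::real) = - ss / (tt - ss) * (U + V) + 1 / (tt - ss) * (ss * U + tt * V)"
proof -
  assume h: "tt - ss > 0"
  define D where "D = tt - ss"
  have D: "D \<noteq> 0" using h D_def by simp
  have "- ss / D * (U + V) + 1 / D * (ss * U + tt * V) = ((tt - ss) * V) / D"
    using D by (simp add: field_simps)
  then show ?thesis using D D_def by simp
qed

lemma coef_aux2: "ss - tt > 0 \<Longrightarrow> (U::real) = - tt / (ss - tt) * (U + V) + 1 / (ss - tt) * (ss * U + tt * V)"
proof -
  assume h: "ss - tt > 0"
  define D where "D = ss - tt"
  have D: "D \<noteq> 0" using h D_def by simp
  have "- tt / D * (U + V) + 1 / D * (ss * U + tt * V) = ((ss - tt) * U) / D"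
    using D by (simp add: field_simps)
  then show ?thesis using D D_def by simp
qed

lemma core:
  fixes Z :: "(int \<times> int) set" and p u Q :: "int \<times> int" and d k :: int
  assumes fin: "finite Z" and pZ: "p \<notin> Z"
  and closed: "\<And>y. emb y \<in> convex hull (emb ` insert p Z) \<Longrightarrow> y = p \<or> y \<in> Z"
  and prim: "gcd (fst u) (snd u) = 1"
  and lev: "\<And>y. y \<in> Z \<Longrightarrow> k \<le> ipi (y - p) u \<and> ipi (y - p) u \<le> k + d - 1"
  and QZ: "Q \<in> Z" and Qk: "ipi (Q - p) u = k" and k2: "k \<ge> 2"
  and wid: "\<And>w. primitive w \<Longrightarrow> \<exists>y1\<in>insert p Z. \<exists>y2\<in>insert p Z. d \<le> ipi y1 w - ipi y2 w"
  and dpos: "d > 0"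
  shows "unimod_equiv (convex hull (emb ` insert p Z)) (Upsilon d)"
proof -
  define C where "C = convex hull (emb ` insert p Z)"
  have memC: "y = p \<or> y \<in> Z"
    if "y1 \<in> insert p Z" "y2 \<in> insert p Z" "0 \<le> a" "0 \<le> b" "a + b \<le> 1"
       "of_int (fst y - fst p) = a * of_int (fst y1 - fst p) + b * of_int (fst y2 - fst p)"
       "of_int (snd y - snd p) = a * of_int (snd y1 - snd p) + b * of_int (snd y2 - snd p)"
    for y y1 y2 :: "int \<times> int" and a b :: real
  proof -
    have "emb y \<in> convex hull {emb p, emb y1, emb y2}"
      by (rule in_hull3[OF that(3,4,5)]) (use that(6,7) in \<open>auto simp: emb_def algebra_simps\<close>)
    then have "emb y \<in> C" unfolding C_def
      by (rule hull3_sub[rotated 3]) (use that(1,2) in auto)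
    then show ?thesis using closed C_def by blast
  qed
  define q where "q = Q - p"
  have qk: "ipi q u = k" using Qk q_def by simp
  define g where "g = gcd (fst q) (snd q)"
  have g1: "g = 1"
  proof (rule ccontr)
    assume "g \<noteq> 1"
    have "q \<noteq> (0,0)" using qk k2 by (auto simp: ipi_def)
    then have "g > 0" unfolding g_def by (cases q) auto
    with \<open>g \<noteq> 1\<close> have g2: "g \<ge> 2" by simp
    obtain a1 where a1: "fst q = g * a1" unfolding g_def by (meson gcd_dvd1 dvdE)
    obtain a2 where a2: "snd q = g * a2" unfolding g_def by (meson gcd_dvd2 dvdE)
    define W where "W = (fst p + a1, snd p + a2)"
    have gr: "real_of_int g \<noteq> 0" using g2 by simp
    have "W = p \<or> W \<in> Z"
    proof (rule memC[of Q p "1 / of_int g" 0])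
      show "real_of_int (fst W - fst p) = 1 / of_int g * of_int (fst Q - fst p) + 0 * of_int (fst p - fst p)"
        using a1 gr q_def by (simp add: W_def)
      show "real_of_int (snd W - snd p) = 1 / of_int g * of_int (snd Q - snd p) + 0 * of_int (snd p - snd p)"
        using a2 gr q_def by (simp add: W_def)
    qed (use QZ g2 in auto)
    then show False
    proof
      assume "W = p"
      then have "a1 = 0" "a2 = 0" by (auto simp: W_def prod_eq_iff)
      then show False using \<open>q \<noteq> (0,0)\<close> a1 a2 by (simp add: prod_eq_iff)
    next
      assume "W \<in> Z"
      then have "k \<le> ipi (W - p) u" using lev by blast
      moreover have "ipi q u = g * ipi (W - p) u"
        using a1 a2 by (simp add: ipi_def W_def algebra_simps)
      ultimately have kl: "k \<le> ipi (W - p) u" "k = g * ipi (W - p) u" using qk by auto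
      have "2 * ipi (W - p) u \<le> g * ipi (W - p) u"
        using g2 kl k2 by (intro mult_right_mono) auto
      then show False using kl k2 by linarith
    qed
  qed
  obtain ba bb where bez: "ba * fst q + bb * snd q = 1"
    using bezout_int[of "fst q" "snd q"] g1 g_def by auto
  define R where "R = (bb, - ba)"
  have detR: "fst R * snd q - snd R * fst q = 1" using bez by (simp add: R_def algebra_simps)
  define lR where "lR = ipi R u"
  have nz: "lR mod k \<noteq> 0"
  proof
    assume "lR mod k = 0"
    then obtain j where j: "lR = k * j" by auto
    have "fst u = fst u * (fst R * snd q - snd R * fst q)" using detR by simp
    also have "\<dots> = snd q * lR - snd R * ipi q u" by (simp add: lR_def ipi_def algebra_simps)
    also have "\<dots> = k * (snd q * j - snd R)" using j qk by (simp add: algebra_simps)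
    finally have d1: "k dvd fst u" by simp
    have "snd u = snd u * (fst R * snd q - snd R * fst q)" using detR by simp
    also have "\<dots> = fst R * ipi q u - fst q * lR" by (simp add: lR_def ipi_def algebra_simps)
    also have "\<dots> = k * (fst R - fst q * j)" using j qk by (simp add: algebra_simps)
    finally have d2: "k dvd snd u" by simp
    have "k dvd 1" using d1 d2 prim by (metis gcd_greatest)
    then show False using k2 by simp
  qed
  define j where "j = lR div k"
  define U where "U = (fst R - j * fst q, snd R - j * snd q)"
  define V where "V = (fst q - fst U, snd q - snd U)"
  define qU where "qU = ipi U u"
  define qV where "qV = ipi V u"
  have qUe: "qU = lR mod k"
  proof -
    have "qU = lR - j * ipi q u" unfolding qU_def U_def lR_def by (simp add: ipi_def algebra_simps)
    also have "\<dots> = lR - (lR div k) * k" using qk j_def by simp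
    also have "\<dots> = lR mod k" by (simp add: minus_div_mult_eq_mod)
    finally show ?thesis .
  qed
  have qU1: "1 \<le> qU" "qU \<le> k - 1" using nz k2 qUe
    by (smt (verit) pos_mod_sign pos_mod_bound)+
  have qVe: "qV = k - qU" unfolding qV_def qU_def V_def using qk by (simp add: ipi_def algebra_simps)
  have detUV: "fst U * snd V - snd U * fst V = 1"
    using detR by (simp add: U_def V_def algebra_simps)
  define s where "s = (\<lambda>x::int\<times>int. fst x * snd V - snd x * fst V)"
  define t where "t = (\<lambda>x::int\<times>int. fst U * snd x - snd U * fst x)"
  have decomp1: "fst x = s x * fst U + t x * fst V" for x
  proof -
    have "fst x = fst x * (fst U * snd V - snd U * fst V)" using detUV by simp
    then show ?thesis by (simp add: s_def t_def algebra_simps)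
  qed
  have decomp2: "snd x = s x * snd U + t x * snd V" for x
  proof -
    have "snd x = snd x * (fst U * snd V - snd U * fst V)" using detUV by simp
    then show ?thesis by (simp add: s_def t_def algebra_simps)
  qed
  have lev_st: "ipi x u = s x * qU + t x * qV" for x
    using decomp1[of x] decomp2[of x] by (simp add: ipi_def qU_def qV_def algebra_simps)
  have qUV1: "fst q = fst U + fst V" "snd q = snd U + snd V" by (simp_all add: V_def)
  have qV1: "1 \<le> qV" "qV \<le> k - 1" using qU1 qVe by auto
  have noZ: False if "X \<noteq> (0,0)" "ipi X u \<le> k - 1" "y \<in> Z" "0 \<le> a" "0 \<le> b" "a + b \<le> 1"
    "real_of_int (fst X) = a * of_int (fst q) + b * of_int (fst y - fst p)"
    "real_of_int (snd X) = a * of_int (snd q) + b * of_int (snd y - snd p)" for X y a b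
  proof -
    define W where "W = (fst p + fst X, snd p + snd X)"
    have "W = p \<or> W \<in> Z"
      by (rule memC[of Q y a b]) (use that QZ q_def in \<open>auto simp: W_def\<close>)
    then show False
    proof
      assume "W = p" then show False using that(1) by (auto simp: W_def prod_eq_iff)
    next
      assume "W \<in> Z" then have "k \<le> ipi (W - p) u" using lev by blast
      then show False using that(2) by (simp add: W_def ipi_def)
    qed
  qed
  have st_pos: "1 \<le> s (y - p) \<and> 1 \<le> t (y - p)" if yZ: "y \<in> Z" for y
  proof -
    define x where "x = y - p"
    have lx: "k \<le> s x * qU + t x * qV" using lev[OF yZ] lev_st[of x] x_def by simp
    have ex1: "real_of_int (fst y - fst p) = of_int (s x) * of_int (fst U) + of_int (t x) * of_int (fst V)"
      using decomp1[of x] x_def by (metis fst_diff of_int_add of_int_mult)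
    have ex2: "real_of_int (snd y - snd p) = of_int (s x) * of_int (snd U) + of_int (t x) * of_int (snd V)"
      using decomp2[of x] x_def by (metis snd_diff of_int_add of_int_mult)
    have eq1: "real_of_int (fst q) = of_int (fst U) + of_int (fst V)" using qUV1 by simp
    have eq2: "real_of_int (snd q) = of_int (snd U) + of_int (snd V)" using qUV1 by simp
    have "1 \<le> s x"
    proof (rule ccontr)
      assume "\<not> 1 \<le> s x"
      then have s0: "s x \<le> 0" by simp
      have "t x \<ge> 1"
      proof (rule ccontr)
        assume "\<not> 1 \<le> t x"
        then have "t x * qV \<le> 0" using qV1 by (simp add: mult_nonpos_nonneg)
        moreover have "s x * qU \<le> 0" using s0 qU1 by (simp add: mult_nonpos_nonneg)
        ultimately show False using lx k2 by simp
      qed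
      then have pos: "real_of_int (t x) - of_int (s x) > 0" using s0 by simp
      show False
      proof (rule noZ[of V y "- of_int (s x) / (of_int (t x) - of_int (s x))" "1 / (of_int (t x) - of_int (s x))"])
        show "V \<noteq> (0,0)" using qV1 by (auto simp: qV_def ipi_def)
        show "0 \<le> - real_of_int (s x) / (real_of_int (t x) - real_of_int (s x))" using pos s0 by (simp add: divide_nonpos_pos)
        show "- real_of_int (s x) / (real_of_int (t x) - real_of_int (s x)) + 1 / (real_of_int (t x) - real_of_int (s x)) \<le> 1"
          using pos \<open>t x \<ge> 1\<close> by (simp add: field_simps)
        show "real_of_int (fst V) = - real_of_int (s x) / (real_of_int (t x) - real_of_int (s x)) * real_of_int (fst q) + 1 / (real_of_int (t x) - real_of_int (s x)) * real_of_int (fst y - fst p)"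
          using pos unfolding ex1 eq1 by (rule coef_aux1)
        show "real_of_int (snd V) = - real_of_int (s x) / (real_of_int (t x) - real_of_int (s x)) * real_of_int (snd q) + 1 / (real_of_int (t x) - real_of_int (s x)) * real_of_int (snd y - snd p)"
          using pos unfolding ex2 eq2 by (rule coef_aux1)
      qed (use qV1 pos yZ in \<open>auto simp: qV_def\<close>)
    qed
    moreover have "1 \<le> t x"
    proof (rule ccontr)
      assume "\<not> 1 \<le> t x"
      then have t0: "t x \<le> 0" by simp
      have "s x \<ge> 1"
      proof (rule ccontr)
        assume "\<not> 1 \<le> s x"
        then have "s x * qU \<le> 0" using qU1 by (simp add: mult_nonpos_nonneg)
        moreover have "t x * qV \<le> 0" using t0 qV1 by (simp add: mult_nonpos_nonneg)
        ultimately show False using lx k2 by simp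
      qed
      then have pos: "real_of_int (s x) - of_int (t x) > 0" using t0 by simp
      show False
      proof (rule noZ[of U y "- of_int (t x) / (of_int (s x) - of_int (t x))" "1 / (of_int (s x) - of_int (t x))"])
        show "U \<noteq> (0,0)" using qU1 by (auto simp: qU_def ipi_def)
        show "0 \<le> - real_of_int (t x) / (real_of_int (s x) - real_of_int (t x))" using pos t0 by (simp add: divide_nonpos_pos)
        show "- real_of_int (t x) / (real_of_int (s x) - real_of_int (t x)) + 1 / (real_of_int (s x) - real_of_int (t x)) \<le> 1"
          using pos \<open>s x \<ge> 1\<close> by (simp add: field_simps)
        show "real_of_int (fst U) = - real_of_int (t x) / (real_of_int (s x) - real_of_int (t x)) * real_of_int (fst q) + 1 / (real_of_int (s x) - real_of_int (t x)) * real_of_int (fst y - fst p)"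
          using pos unfolding ex1 eq1 by (rule coef_aux2)
        show "real_of_int (snd U) = - real_of_int (t x) / (real_of_int (s x) - real_of_int (t x)) * real_of_int (snd q) + 1 / (real_of_int (s x) - real_of_int (t x)) * real_of_int (snd y - snd p)"
          using pos unfolding ex2 eq2 by (rule coef_aux2)
      qed (use qU1 pos yZ in \<open>auto simp: qU_def\<close>)
    qed
    ultimately show ?thesis using x_def by simp
  qed
  have sum_le: "s (y - p) + t (y - p) \<le> d + 1" if yZ: "y \<in> Z" for y
  proof -
    define x where "x = y - p"
    have st: "1 \<le> s x" "1 \<le> t x" using st_pos[OF yZ] x_def by auto
    have "s x * qU + t x * qV \<le> qU + qV + d - 1"
      using lev[OF yZ] lev_st[of x] x_def qVe by simp
    then have h: "(s x - 1) * qU + (t x - 1) * qV \<le> d - 1" by (simp add: algebra_simps)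
    have "(s x - 1) * 1 \<le> (s x - 1) * qU" using st qU1 by (intro mult_left_mono) auto
    moreover have "(t x - 1) * 1 \<le> (t x - 1) * qV" using st qV1 by (intro mult_left_mono) auto
    ultimately show ?thesis using h x_def by simp
  qed
  have gcds: "gcd (snd V) (- fst V) = 1" "gcd (- snd U) (fst U) = 1"
    using gcd1_of_det[OF detUV] by auto
  define ws where "ws = (snd V, - fst V)"
  define wt where "wt = (- snd U, fst U)"
  have pws: "primitive ws" using gcds(1) unfolding primitive_def ws_def by auto
  have pwt: "primitive wt" using gcds(2) unfolding primitive_def wt_def by auto
  have ws_eq: "ipi y ws - ipi p ws = s (y - p)" for y
    by (simp add: ipi_def ws_def s_def algebra_simps)
  have wt_eq: "ipi y wt - ipi p wt = t (y - p)" for y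
    by (simp add: ipi_def wt_def t_def algebra_simps)
  have s0: "s (p - p) = 0" "t (p - p) = 0" by (simp_all add: s_def t_def)
  obtain A where A: "A \<in> Z" "s (A - p) = d" "t (A - p) = 1"
  proof -
    obtain y1 y2 where y: "y1 \<in> insert p Z" "y2 \<in> insert p Z" "d \<le> ipi y1 ws - ipi y2 ws"
      using wid[OF pws] by blast
    have "ipi y1 ws - ipi y2 ws = s (y1 - p) - s (y2 - p)" using ws_eq[of y1] ws_eq[of y2] by simp
    moreover have "s (y2 - p) \<ge> 0" using y(2) st_pos s0 by fastforce
    ultimately have sy: "s (y1 - p) \<ge> d" using y(3) by simp
    then have "y1 \<noteq> p" using s0 dpos by auto
    then have "y1 \<in> Z" using y(1) by simp
    then show ?thesis using that sy st_pos[of y1] sum_le[of y1] by fastforce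
  qed
  obtain B where B: "B \<in> Z" "s (B - p) = 1" "t (B - p) = d"
  proof -
    obtain y1 y2 where y: "y1 \<in> insert p Z" "y2 \<in> insert p Z" "d \<le> ipi y1 wt - ipi y2 wt"
      using wid[OF pwt] by blast
    have "ipi y1 wt - ipi y2 wt = t (y1 - p) - t (y2 - p)" using wt_eq[of y1] wt_eq[of y2] by simp
    moreover have "t (y2 - p) \<ge> 0" using y(2) st_pos s0 by fastforce
    ultimately have sy: "t (y1 - p) \<ge> d" using y(3) by simp
    then have "y1 \<noteq> p" using s0 dpos by auto
    then have "y1 \<in> Z" using y(1) by simp
    then show ?thesis using that sy st_pos[of y1] sum_le[of y1] by fastforce
  qed
  define T where "T = unimod_map (snd V) (- fst V) (- snd U) (fst U)
     (snd p * fst V - fst p * snd V) (snd U * fst p - fst U * snd p)"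
  have Temb: "T (emb y) = emb (s (y - p), t (y - p))" for y
    by (simp add: T_def unimod_map_def emb_def s_def t_def algebra_simps)
  define F where "F = (\<lambda>y. (s (y - p), t (y - p))) ` insert p Z"
  have "T ` C = convex hull (T ` emb ` insert p Z)" unfolding C_def T_def by (rule unimod_hull)
  also have "T ` emb ` insert p Z = emb ` F"
    unfolding F_def image_image Temb by simp
  finally have TC: "T ` C = convex hull (emb ` F)" .
  have "convex hull (emb ` F) = Upsilon d"
  proof
    show "convex hull (emb ` F) \<subseteq> Upsilon d"
    proof (rule hull_minimal)
      show "convex (Upsilon d)" by (simp add: Upsilon_def convex_convex_hull)
      show "emb ` F \<subseteq> Upsilon d"
      proof
        fix z assume "z \<in> emb ` F"
        then obtain y where y: "y \<in> insert p Z" "z = emb (s (y - p), t (y - p))"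
          unfolding F_def by blast
        show "z \<in> Upsilon d"
        proof (cases "y = p")
          case True
          then have "z = (0,0)" using y s0 by (simp add: emb_def)
          then show ?thesis unfolding Upsilon_def by (simp add: hull_inc)
        next
          case False
          then have "y \<in> Z" using y by simp
          then show ?thesis using y st_pos sum_le hullUps[of "s (y - p)" "t (y - p)" d] dpos
            by (simp add: emb_def)
        qed
      qed
    qed
    have "{(0,0), (1, of_int d), (of_int d, 1)} \<subseteq> emb ` F"
    proof -
      have "emb (s (p - p), t (p - p)) \<in> emb ` F" "emb (s (B - p), t (B - p)) \<in> emb ` F"
           "emb (s (A - p), t (A - p)) \<in> emb ` F"
        unfolding F_def using A B by blast+
      then show ?thesis using A B s0 by (simp add: emb_def)
    qed
    then show "Upsilon d \<subseteq> convex hull (emb ` F)" unfolding Upsilon_def by (rule hull_mono)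
  qed
  then have "T ` C = Upsilon d" using TC by simp
  moreover have "snd V * fst U - (- fst V) * (- snd U) = 1" using detUV by (simp add: algebra_simps)
  ultimately show ?thesis unfolding unimod_equiv_def C_def T_def by blast
qed



lemma lattice_emb: "lattice_pt x \<longleftrightarrow> (\<exists>z. x = emb z)"
proof
  assume "lattice_pt x"
  then obtain i j where "fst x = of_int i" "snd x = of_int j"
    unfolding lattice_pt_def by (auto elim!: Ints_cases)
  then have "x = emb (i, j)" by (simp add: emb_def prod_eq_iff)
  then show "\<exists>z. x = emb z" by blast
qed (auto simp: lattice_pt_def emb_def)

theorem lemma2p2:
  fixes D :: "(real \<times> real) set" and d :: int and P :: "real \<times> real" and v :: "int \<times> int"
  assumes "lattice_polygon D"
    and "lw D = of_int d" and "d > 0"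
    and "P extreme_point_of D"
    and "primitive v"
    and "lw_dir (remove_vertex D P) v < of_int d"
    and "lw_dir (remove_vertex D P) v < lw_dir D v - 1"
  shows "unimod_equiv D (Upsilon d)"
proof -
  obtain S where S: "finite S" "S \<noteq> {}" "\<forall>x\<in>S. lattice_pt x" "D = convex hull S"
    using assms(1) unfolding lattice_polygon_def by blast
  have PS: "P \<in> S" using assms(4) S(4) extreme_point_of_convex_hull by blast
  then obtain p where p: "P = emb p" using S(3) lattice_emb by blast
  define Z where "Z = {y. emb y \<in> D \<and> y \<noteq> p}"
  have pZ: "p \<notin> Z" by (simp add: Z_def)
  have "compact D" using S by (simp add: compact_convex_hull finite_imp_compact)
  then obtain Bd where Bd: "\<And>x. x \<in> D \<Longrightarrow> norm x \<le> Bd"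
    using compact_imp_bounded bounded_iff by metis
  have finZ: "finite Z"
  proof -
    define c where "c = \<lceil>Bd\<rceil>"
    have "Z \<subseteq> {-c..c} \<times> {-c..c}"
    proof
      fix y assume "y \<in> Z"
      then have n: "norm (emb y) \<le> Bd" using Bd Z_def by auto
      have "norm (real_of_int (fst y)) \<le> norm (emb y)" unfolding emb_def by (rule norm_fst_le)
      then have "\<bar>real_of_int (fst y)\<bar> \<le> Bd" using n by simp
      then have 1: "\<bar>fst y\<bar> \<le> c" unfolding c_def by linarith
      have "norm (real_of_int (snd y)) \<le> norm (emb y)" unfolding emb_def by (rule norm_snd_le)
      then have "\<bar>real_of_int (snd y)\<bar> \<le> Bd" using n by simp
      then have 2: "\<bar>snd y\<bar> \<le> c" unfolding c_def by linarith
      show "y \<in> {-c..c} \<times> {-c..c}" using 1 2 by (cases y) auto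
    qed
    then show ?thesis by (rule finite_subset) auto
  qed
  have SD: "x \<in> D" if "x \<in> S" for x using that by (simp add: S(4) hull_inc)
  have pD: "emb p \<in> D" using SD PS p by simp
  have latD: "{x \<in> D. lattice_pt x} = emb ` insert p Z"
    using pD unfolding Z_def lattice_emb by blast
  have DH: "D = convex hull (emb ` insert p Z)"
  proof
    have "S \<subseteq> {x \<in> D. lattice_pt x}" using S(3) SD by blast
    then have "S \<subseteq> emb ` insert p Z" using latD by simp
    then show "D \<subseteq> convex hull (emb ` insert p Z)" using S(4) hull_mono by blast
    have "emb ` insert p Z \<subseteq> D" using latD by blast
    then show "convex hull (emb ` insert p Z) \<subseteq> D"
      using S(4) by (simp add: hull_minimal convex_convex_hull)
  qed
  have RV: "remove_vertex D P = convex hull (emb ` Z)"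
  proof -
    have "{x \<in> D. lattice_pt x} - {P} = emb ` Z"
      unfolding latD p using pZ by (auto simp: emb_inj)
    then show ?thesis by (simp add: remove_vertex_def)
  qed
  have finI: "finite (insert p Z)" "insert p Z \<noteq> {}" using finZ by auto
  have wid_real: "of_int d \<le> lw_dir D w" if "primitive w" for w
  proof -
    have "lw D \<le> lw_dir D w" unfolding lw_def
    proof (rule cINF_lower)
      show "bdd_below (lw_dir D ` {v. primitive v})"
        unfolding DH using lw_dir_hull_nonneg[of "emb ` insert p Z"] finI
        by (intro bdd_belowI[of _ 0]) auto
    qed (use that in auto)
    then show ?thesis using assms(2) by simp
  qed
  have wid: "\<exists>y1\<in>insert p Z. \<exists>y2\<in>insert p Z. d \<le> ipi y1 w - ipi y2 w" if "primitive w" for w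
  proof -
    have "real_of_int d \<le> of_int (Max ((\<lambda>y. ipi y w) ` insert p Z) - Min ((\<lambda>y. ipi y w) ` insert p Z))"
      using wid_real[OF that] unfolding DH lw_dir_emb[OF finI] .
    then have le: "d \<le> Max ((\<lambda>y. ipi y w) ` insert p Z) - Min ((\<lambda>y. ipi y w) ` insert p Z)"
      by linarith
    have "Max ((\<lambda>y. ipi y w) ` insert p Z) \<in> (\<lambda>y. ipi y w) ` insert p Z"
      using finI by (intro Max_in) auto
    then obtain y1 where y1: "y1 \<in> insert p Z" "Max ((\<lambda>y. ipi y w) ` insert p Z) = ipi y1 w" by (metis (no_types, lifting) imageE)
    have "Min ((\<lambda>y. ipi y w) ` insert p Z) \<in> (\<lambda>y. ipi y w) ` insert p Z"
      using finI by (intro Min_in) auto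
    then obtain y2 where y2: "y2 \<in> insert p Z" "Min ((\<lambda>y. ipi y w) ` insert p Z) = ipi y2 w" by (metis (no_types, lifting) imageE)
    show ?thesis using y1 y2 le by auto
  qed
  have Zne: "Z \<noteq> {}"
  proof
    assume "Z = {}"
    have "primitive (1, 0)" by (simp add: primitive_def)
    from wid[OF this] show False using \<open>Z = {}\<close> assms(3) by auto
  qed
  define f where "f = (\<lambda>y. ipi y v)"
  define M where "M = Max (f ` Z)"
  define m where "m = Min (f ` Z)"
  define c where "c = f p"
  have w1: "lw_dir (remove_vertex D P) v = of_int (M - m)"
    unfolding RV M_def m_def f_def using lw_dir_emb[OF finZ Zne] .
  have w2: "lw_dir D v = of_int (max c M - min c m)"
    unfolding DH lw_dir_emb[OF finI] using finZ Zne
    by (simp add: M_def m_def c_def f_def)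
  have h1: "M - m < d" using assms(6) w1 by simp
  have h2: "M - m < max c M - min c m - 1" using assms(7) w1 w2 by linarith
  have Mm: "m \<le> M" "\<And>y. y \<in> Z \<Longrightarrow> m \<le> f y \<and> f y \<le> M"
    using finZ Zne by (auto simp: M_def m_def)
  have "M \<in> f ` Z" using finZ Zne M_def by simp
  then obtain QM where QM: "QM \<in> Z" "f QM = M" by (metis imageE)
  have "m \<in> f ` Z" using finZ Zne m_def by simp
  then obtain Qm where Qm: "Qm \<in> Z" "f Qm = m" by (metis imageE)
  have closed: "\<And>y. emb y \<in> convex hull (emb ` insert p Z) \<Longrightarrow> y = p \<or> y \<in> Z"
  proof -
    fix y assume "emb y \<in> convex hull (emb ` insert p Z)"
    then have "emb y \<in> D" by (metis DH)
    then show "y = p \<or> y \<in> Z" unfolding Z_def by blast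
  qed
  have gv: "gcd (fst v) (snd v) = 1" using assms(5) by (simp add: primitive_def)
  have "c \<ge> M + 2 \<or> c \<le> m - 2" using h2 Mm(1) by linarith
  then have "unimod_equiv (convex hull (emb ` insert p Z)) (Upsilon d)"
  proof
    assume cM: "c \<ge> M + 2"
    show ?thesis
    proof (rule core[OF finZ pZ closed _ _ QM(1) _ _ wid assms(3)])
      show "gcd (fst (- v)) (snd (- v)) = 1" using gv by simp
      show "ipi (QM - p) (- v) = c - M" using QM by (simp add: f_def c_def ipi_def algebra_simps)
      show "2 \<le> c - M" using cM by simp
      fix y assume "y \<in> Z"
      then have "m \<le> f y \<and> f y \<le> M" using Mm by blast
      moreover have "ipi (y - p) (- v) = c - f y" by (simp add: f_def c_def ipi_def algebra_simps)
      ultimately show "c - M \<le> ipi (y - p) (- v) \<and> ipi (y - p) (- v) \<le> c - M + d - 1"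
        using h1 by simp
    qed
  next
    assume cm: "c \<le> m - 2"
    show ?thesis
    proof (rule core[OF finZ pZ closed gv _ Qm(1) _ _ wid assms(3)])
      show "ipi (Qm - p) v = m - c" using Qm by (simp add: f_def c_def ipi_def algebra_simps)
      show "2 \<le> m - c" using cm by simp
      fix y assume "y \<in> Z"
      then have "m \<le> f y \<and> f y \<le> M" using Mm by blast
      moreover have "ipi (y - p) v = f y - c" by (simp add: f_def c_def ipi_def algebra_simps)
      ultimately show "m - c \<le> ipi (y - p) v \<and> ipi (y - p) v \<le> m - c + d - 1"
        using h1 by simp
    qed
  qed
  then show ?thesis using DH by simp
qed

end
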